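(* The average number of leaves of a uniformly random Retakh plane tree with $n$ nodes is asymptotically $\frac{4}{9}n$ as $n\to\infty$. Equivalently, the average number of peaks of a uniformly random Retakh Dyck path of semilength $n$ is $\sim\frac49 n$.
   Context: A Retakh plane tree is a plane (ordered rooted) tree in which every non-root leaf has depth $1$ or even depth (root depth $0$); a leaf is a node without children. A Retakh Dyck path is a Dyck path all of whose peaks (up-step followed by down-step) are at level $1$ or at an even level; under the standard bijection, Dyck paths of semilength $n$ correspond to plane trees with $n+1$ nodes and peaks correspond to non-root leaves. *)

theory Defs
  imports Complex_Main "HOL-Library.Landau_Symbols"
begin

datatype ptree = Node "ptree list"

fun nodes :: "ptree \<Rightarrow> nat" where
  "nodes (Node ts) = 1 + sum_list (map nodes ts)"

fun leaves :: "ptree \<Rightarrow> nat" where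
  "leaves (Node ts) = (if ts = [] then 1 else sum_list (map leaves ts))"

fun leaf_depths :: "nat \<Rightarrow> ptree \<Rightarrow> nat set" where
  "leaf_depths d (Node ts) =
     (if ts = [] then {d} else \<Union> (set (map (leaf_depths (Suc d)) ts)))"

definition retakh :: "ptree \<Rightarrow> bool" where
  "retakh t \<longleftrightarrow> (\<forall>d \<in> leaf_depths 0 t. d \<noteq> 0 \<longrightarrow> d = 1 \<or> even d)"

definition retakh_trees :: "nat \<Rightarrow> ptree set" where
  "retakh_trees n = {t. retakh t \<and> nodes t = n}"

definition avg_leaves :: "nat \<Rightarrow> real" where
  "avg_leaves n = (\<Sum>t\<in>retakh_trees n. real (leaves t)) / real (card (retakh_trees n))"

end

theory Submission
  imports Defs "HOL-Computational_Algebra.Formal_Power_Series"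
begin


fun good :: "bool \<Rightarrow> ptree \<Rightarrow> bool" where
  "good p (Node ts) = (if ts = [] then p else (\<forall>t\<in>set ts. good (\<not>p) t))"

lemma ld_shift: "leaf_depths d t = (\<lambda>x. x + d) ` leaf_depths 0 t"
proof (induction t arbitrary: d)
  case (Node ts)
  show ?case
  proof (cases "ts = []")
    case True then show ?thesis by simp
  next
    case False
    have "leaf_depths d (Node ts) = (\<Union>t\<in>set ts. leaf_depths (Suc d) t)" using False by simp
    also have "\<dots> = (\<Union>t\<in>set ts. (\<lambda>x. x + Suc d) ` leaf_depths 0 t)"
      by (rule SUP_cong[OF refl]) (rule Node.IH)
    also have "\<dots> = (\<lambda>x. x + d) ` (\<Union>t\<in>set ts. (\<lambda>x. x + Suc 0) ` leaf_depths 0 t)"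
      by (auto simp: image_image image_UN)
    also have "(\<Union>t\<in>set ts. (\<lambda>x. x + Suc 0) ` leaf_depths 0 t) = (\<Union>t\<in>set ts. leaf_depths (Suc 0) t)"
      by (rule SUP_cong[OF refl]) (rule Node.IH[symmetric])
    also have "\<dots> = leaf_depths 0 (Node ts)"
      using False by simp
    finally show ?thesis .
  qed
qed

lemma ld0_Node: "ts \<noteq> [] \<Longrightarrow> leaf_depths 0 (Node ts) = (\<Union>t\<in>set ts. Suc ` leaf_depths 0 t)"
  using ld_shift[of "Suc 0"] by simp

lemma ld_Nil[simp]: "leaf_depths d (Node []) = {d}" by simp
declare leaf_depths.simps[simp del]

lemma good_iff: "good p t \<longleftrightarrow> (\<forall>x\<in>leaf_depths 0 t. even x = p)"
proof (induction t arbitrary: p)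
  case (Node ts)
  show ?case
  proof (cases "ts = []")
    case True then show ?thesis by simp
  next
    case False
    have "good p (Node ts) \<longleftrightarrow> (\<forall>t\<in>set ts. good (\<not>p) t)" using False by simp
    also have "\<dots> \<longleftrightarrow> (\<forall>t\<in>set ts. \<forall>x\<in>leaf_depths 0 t. even x = (\<not>p))" using Node.IH by simp
    also have "\<dots> \<longleftrightarrow> (\<forall>x\<in>(\<Union>t\<in>set ts. Suc ` leaf_depths 0 t). even x = p)" by auto
    also have "\<dots> \<longleftrightarrow> (\<forall>x\<in>leaf_depths 0 (Node ts). even x = p)" by (simp only: ld0_Node[OF False])
    finally show ?thesis .
  qed
qed

fun kids :: "ptree \<Rightarrow> ptree list" where "kids (Node ts) = ts"

definition allc :: "(ptree \<Rightarrow> bool) \<Rightarrow> ptree \<Rightarrow> bool" where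
  "allc P t = (\<forall>c\<in>set (kids t). P c)"

definition d1 :: "ptree \<Rightarrow> bool" where "d1 = allc (good True)"
definition rt :: "ptree \<Rightarrow> bool" where "rt = allc d1"

lemma good_True: "good True = allc (good False)"
proof
  fix t show "good True t = allc (good False) t" by (cases t) (auto simp: allc_def)
qed

lemma good_False: "good False t \<longleftrightarrow> allc (good True) t \<and> t \<noteq> Node []"
  by (cases t) (auto simp: allc_def)

lemma retakh_rt: "retakh t \<longleftrightarrow> rt t"
proof (cases t)
  case (Node ts)
  show ?thesis
  proof (cases "ts = []")
    case True then show ?thesis using Node by (simp add: retakh_def rt_def allc_def)
  next
    case False
    have c: "(\<forall>x\<in>leaf_depths 0 c. x = 0 \<or> odd x) \<longleftrightarrow> d1 c" for c
    proof (cases c)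
      case (Node cs)
      show ?thesis
      proof (cases "cs = []")
        case True then show ?thesis using Node by (simp add: d1_def allc_def)
      next
        case False
        then show ?thesis unfolding Node ld0_Node[OF False] by (auto simp: d1_def allc_def good_iff)
      qed
    qed
    have "retakh t \<longleftrightarrow> (\<forall>c\<in>set ts. \<forall>x\<in>leaf_depths 0 c. x = 0 \<or> odd x)"
      unfolding Node retakh_def ld0_Node[OF False] by auto
    also have "\<dots> \<longleftrightarrow> rt t" using c Node by (simp add: rt_def allc_def)
    finally show ?thesis .
  qed
qed


definition trs :: "(ptree \<Rightarrow> bool) \<Rightarrow> nat \<Rightarrow> ptree set" where
  "trs P n = {t. P t \<and> nodes t = n}"
definition frs :: "(ptree \<Rightarrow> bool) \<Rightarrow> nat \<Rightarrow> ptree list set" where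
  "frs P n = {ts. (\<forall>t\<in>set ts. P t) \<and> sum_list (map nodes ts) = n}"

lemma nodes_pos[simp]: "0 < nodes t" by (cases t) auto
lemma nodes_ne0[simp]: "nodes t \<noteq> 0" by (cases t) auto

lemma len_le_sum: "length ts \<le> sum_list (map nodes ts)"
proof (induction ts)
  case (Cons a ts) then show ?case using nodes_pos[of a] by (simp; linarith)
qed simp

lemma finite_le: "finite {t. nodes t \<le> n}"
proof (induction n)
  case 0 then show ?case by (simp add: le_zero_eq)
next
  case (Suc n)
  have "{t. nodes t \<le> Suc n} \<subseteq> Node ` {ts. set ts \<subseteq> {t. nodes t \<le> n} \<and> length ts \<le> n}"
  proof
    fix t assume "t \<in> {t. nodes t \<le> Suc n}"
    then obtain ts where t: "t = Node ts" and s: "sum_list (map nodes ts) \<le> n" by (cases t) auto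
    have "set ts \<subseteq> {t. nodes t \<le> n}"
    proof
      fix c assume "c \<in> set ts"
      then have "nodes c \<le> sum_list (map nodes ts)" by (simp add: member_le_sum_list)
      then show "c \<in> {t. nodes t \<le> n}" using s by simp
    qed
    then show "t \<in> Node ` {ts. set ts \<subseteq> {t. nodes t \<le> n} \<and> length ts \<le> n}"
      using t s len_le_sum[of ts] by auto
  qed
  moreover have "finite (Node ` {ts. set ts \<subseteq> {t. nodes t \<le> n} \<and> length ts \<le> n})"
    using finite_lists_length_le[OF Suc.IH] by simp
  ultimately show ?case by (rule finite_subset)
qed

lemma finite_trs: "finite (trs P n)"
  by (rule finite_subset[OF _ finite_le[of n]]) (auto simp: trs_def)

lemma finite_frs: "finite (frs P n)"
proof -
  have "frs P n \<subseteq> {ts. set ts \<subseteq> {t. nodes t \<le> n} \<and> length ts \<le> n}"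
  proof
    fix ts assume a: "ts \<in> frs P n"
    have "set ts \<subseteq> {t. nodes t \<le> n}"
    proof
      fix c assume "c \<in> set ts"
      then have "nodes c \<le> sum_list (map nodes ts)" by (simp add: member_le_sum_list)
      then show "c \<in> {t. nodes t \<le> n}" using a by (simp add: frs_def)
    qed
    then show "ts \<in> {ts. set ts \<subseteq> {t. nodes t \<le> n} \<and> length ts \<le> n}"
      using a len_le_sum[of ts] by (auto simp: frs_def)
  qed
  then show ?thesis by (rule finite_subset) (rule finite_lists_length_le[OF finite_le])
qed

lemma trs_0: "trs P 0 = {}" by (auto simp: trs_def)

lemma frs_0: "frs P 0 = {[]}"
proof -
  have "sum_list (map nodes ts) = 0 \<Longrightarrow> ts = []" for ts by (cases ts) auto
  then show ?thesis by (auto simp: frs_def)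
qed

lemma frs_Suc_nonempty: "ts \<in> frs P (Suc n) \<Longrightarrow> ts \<noteq> []" by (auto simp: frs_def)

lemma frs_decomp: "0 < n \<Longrightarrow> frs P n = (\<Union>k\<in>{0..n}. (\<lambda>(t,f). t # f) ` (trs P k \<times> frs P (n - k)))"
proof (intro equalityI subsetI)
  fix ts assume n: "0 < n" and ts: "ts \<in> frs P n"
  then obtain t f where tf: "ts = t # f" by (cases ts) (auto simp: frs_def)
  then show "ts \<in> (\<Union>k\<in>{0..n}. (\<lambda>(t,f). t # f) ` (trs P k \<times> frs P (n - k)))"
    using ts by (auto simp: frs_def trs_def intro!: bexI[of _ "nodes t"])
next
  fix ts assume "ts \<in> (\<Union>k\<in>{0..n}. (\<lambda>(t,f). t # f) ` (trs P k \<times> frs P (n - k)))"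
  then show "ts \<in> frs P n" by (auto simp: frs_def trs_def)
qed

lemma frs_disj: "pairwise (\<lambda>k l. ((\<lambda>(t,f). t # f) ` (trs P k \<times> frs P (n - k))) \<inter> ((\<lambda>(t,f). t # f) ` (trs P l \<times> frs P (n - l))) = {}) A"
  by (auto simp: pairwise_def trs_def)

lemma card_frs: "0 < n \<Longrightarrow> card (frs P n) = (\<Sum>k=0..n. card (trs P k) * card (frs P (n - k)))"
proof -
  assume n: "0 < n"
  have "card (frs P n) = (\<Sum>k=0..n. card ((\<lambda>(t,f). t # f) ` (trs P k \<times> frs P (n - k))))"
    unfolding frs_decomp[OF n]
    by (rule card_UN_disjoint) (simp_all add: finite_trs finite_frs, auto simp: trs_def)
  also have "\<dots> = (\<Sum>k=0..n. card (trs P k) * card (frs P (n - k)))"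
    by (rule sum.cong[OF refl], subst card_image) (auto simp: inj_on_def card_cartesian_product)
  finally show ?thesis .
qed

definition lvs :: "ptree list \<Rightarrow> real" where "lvs ts = real (sum_list (map leaves ts))"

lemma sum_frs: "0 < n \<Longrightarrow> (\<Sum>ts\<in>frs P n. lvs ts) =
   (\<Sum>k=0..n. (\<Sum>t\<in>trs P k. real (leaves t)) * real (card (frs P (n - k)))
             + real (card (trs P k)) * (\<Sum>ts\<in>frs P (n - k). lvs ts))"
proof -
  assume n: "0 < n"
  have "(\<Sum>ts\<in>frs P n. lvs ts) = (\<Sum>k=0..n. (\<Sum>ts\<in>(\<lambda>(t,f). t # f) ` (trs P k \<times> frs P (n - k)). lvs ts))"
    unfolding frs_decomp[OF n]
    by (rule sum.UNION_disjoint) (simp_all add: finite_trs finite_frs, auto simp: trs_def)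
  also have "\<dots> = (\<Sum>k=0..n. (\<Sum>t\<in>trs P k. real (leaves t)) * real (card (frs P (n - k)))
             + real (card (trs P k)) * (\<Sum>ts\<in>frs P (n - k). lvs ts))"
  proof (rule sum.cong[OF refl])
    fix k
    have "(\<Sum>ts\<in>(\<lambda>(t,f). t # f) ` (trs P k \<times> frs P (n - k)). lvs ts)
        = (\<Sum>p\<in>trs P k \<times> frs P (n - k). lvs (fst p # snd p))"
      by (subst sum.reindex) (auto simp: inj_on_def case_prod_beta)
    also have "\<dots> = (\<Sum>t\<in>trs P k. \<Sum>f\<in>frs P (n - k). real (leaves t) + lvs f)"
      by (subst sum.cartesian_product) (simp add: lvs_def case_prod_beta)
    also have "\<dots> = (\<Sum>t\<in>trs P k. real (leaves t)) * real (card (frs P (n - k)))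
             + real (card (trs P k)) * (\<Sum>ts\<in>frs P (n - k). lvs ts)"
      by (simp add: sum.distrib sum_distrib_left sum_distrib_right mult.commute)
    finally show "(\<Sum>ts\<in>(\<lambda>(t,f). t # f) ` (trs P k \<times> frs P (n - k)). lvs ts) = \<dots>" .
  qed
  finally show ?thesis .
qed


definition gf :: "(ptree \<Rightarrow> bool) \<Rightarrow> real fps" where "gf P = Abs_fps (\<lambda>n. real (card (trs P n)))"
definition gl :: "(ptree \<Rightarrow> bool) \<Rightarrow> real fps" where "gl P = Abs_fps (\<lambda>n. \<Sum>t\<in>trs P n. real (leaves t))"
definition ff :: "(ptree \<Rightarrow> bool) \<Rightarrow> real fps" where "ff P = Abs_fps (\<lambda>n. real (card (frs P n)))"
definition fl :: "(ptree \<Rightarrow> bool) \<Rightarrow> real fps" where "fl P = Abs_fps (\<lambda>n. \<Sum>ts\<in>frs P n. lvs ts)"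

lemma ff_eq: "ff P = 1 + gf P * ff P"
proof (rule fps_ext)
  fix n show "fps_nth (ff P) n = fps_nth ((1 + gf P * ff P)) n"
  proof (cases "n = 0")
    case True then show ?thesis by (simp add: ff_def gf_def frs_0 trs_0)
  next
    case False
    then show ?thesis
      by (simp add: ff_def gf_def fps_mult_nth card_frs)
  qed
qed

lemma fl_eq: "fl P = gl P * ff P + gf P * fl P"
proof (rule fps_ext)
  fix n show "fps_nth (fl P) n = fps_nth ((gl P * ff P + gf P * fl P)) n"
  proof (cases "n = 0")
    case True then show ?thesis by (simp add: ff_def gf_def fl_def gl_def frs_0 trs_0 lvs_def)
  next
    case False
    then show ?thesis
      by (simp add: ff_def gf_def fl_def gl_def fps_mult_nth sum_frs sum.distrib)
  qed
qed

lemma trs_allc: "trs (allc P) (Suc n) = Node ` frs P n"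
proof (intro equalityI subsetI)
  fix t assume "t \<in> trs (allc P) (Suc n)"
  then show "t \<in> Node ` frs P n" by (cases t) (auto simp: trs_def frs_def allc_def)
qed (auto simp: trs_def frs_def allc_def)

lemma card_trs_allc: "card (trs (allc P) (Suc n)) = card (frs P n)"
  unfolding trs_allc by (rule card_image) (simp add: inj_on_def)

lemma sum_trs_allc: "(\<Sum>t\<in>trs (allc P) (Suc n). real (leaves t)) = (\<Sum>ts\<in>frs P n. lvs ts) + (if n = 0 then 1 else 0)"
proof (cases "n = 0")
  case True then show ?thesis by (simp add: trs_allc frs_0 lvs_def)
next
  case False
  have "(\<Sum>t\<in>trs (allc P) (Suc n). real (leaves t)) = (\<Sum>ts\<in>frs P n. real (leaves (Node ts)))"
    unfolding trs_allc by (subst sum.reindex) (auto simp: inj_on_def)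
  also have "\<dots> = (\<Sum>ts\<in>frs P n. lvs ts)"
  proof (rule sum.cong[OF refl])
    fix ts assume "ts \<in> frs P n"
    then have "ts \<noteq> []" using False by (auto simp: frs_def)
    then show "real (leaves (Node ts)) = lvs ts" by (simp add: lvs_def)
  qed
  finally show ?thesis using False by simp
qed

lemma gf_allc: "gf (allc P) = fps_X * ff P"
proof (rule fps_ext)
  fix n show "fps_nth (gf (allc P)) n = fps_nth ((fps_X * ff P)) n"
    by (cases n) (simp_all add: gf_def ff_def trs_0 card_trs_allc)
qed

lemma gl_allc: "gl (allc P) = fps_X * (fl P + 1)"
proof (rule fps_ext)
  fix n show "fps_nth (gl (allc P)) n = fps_nth ((fps_X * (fl P + 1))) n"
    by (cases n) (simp_all add: gl_def fl_def trs_0 sum_trs_allc)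
qed

lemma trs_gF: "trs (good False) (Suc m) = (if m = 0 then {} else trs (allc (good True)) (Suc m))"
proof (cases "m = 0")
  case True
  have "t \<notin> trs (good False) (Suc 0)" for t
  proof (cases t)
    case (Node ts)
    then show ?thesis by (cases ts) (auto simp: trs_def)
  qed
  then show ?thesis using True by auto
next
  case False
  have "nodes t = Suc m \<Longrightarrow> t \<noteq> Node []" for t using False by auto
  then show ?thesis using False by (auto simp: trs_def good_False)
qed

lemma gf_gF: "gf (good False) = fps_X * (ff (good True) - 1)"
proof (rule fps_ext)
  fix n show "fps_nth (gf (good False)) n = fps_nth ((fps_X * (ff (good True) - 1))) n"
  proof (cases n)
    case 0 then show ?thesis by (simp add: gf_def trs_0)
  next
    case (Suc m) then show ?thesis
      by (cases "m = 0") (simp_all add: gf_def ff_def trs_gF card_trs_allc frs_0)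
  qed
qed

lemma gl_gF: "gl (good False) = fps_X * fl (good True)"
proof (rule fps_ext)
  fix n show "fps_nth (gl (good False)) n = fps_nth ((fps_X * fl (good True))) n"
  proof (cases n)
    case 0 then show ?thesis by (simp add: gl_def trs_0)
  next
    case (Suc m) then show ?thesis
      by (cases "m = 0") (simp_all add: gl_def fl_def trs_gF sum_trs_allc frs_0 lvs_def)
  qed
qed


fun T :: "nat \<Rightarrow> real" where
  "T 0 = 1"
| "T (Suc 0) = 1"
| "T (Suc (Suc n)) = ((2 * real n + 3) * T (Suc n) + 3 * (real n + 1) * T n) / (real n + 2)"

lemma T_rec: "(real n + 2) * T (Suc (Suc n)) = (2 * real n + 3) * T (Suc n) + 3 * (real n + 1) * T n"
  by simp

declare T.simps(3)[simp del]
lemma T2: "T 2 = 3" by (simp add: numeral_2_eq_2 T.simps(3))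

definition tt :: "real fps" where "tt = Abs_fps T"

definition Dl :: "real fps" where "Dl = 1 - 2 * fps_X - 3 * fps_X ^ 2"

lemma tt_deriv: "fps_deriv tt * Dl = (1 + 3 * fps_X) * tt"
proof -
  have e1: "fps_deriv tt * Dl = fps_deriv tt - fps_const 2 * (fps_X * fps_deriv tt) - fps_const 3 * (fps_X ^ 2 * fps_deriv tt)"
    by (simp add: Dl_def algebra_simps numeral_fps_const)
  have e2: "(1 + 3 * fps_X) * tt = tt + fps_const 3 * (fps_X * tt)"
    by (simp add: algebra_simps numeral_fps_const)
  have dn: "fps_nth (fps_deriv tt) j = (real j + 1) * T (Suc j)" for j by (simp add: tt_def)
  show ?thesis unfolding e1 e2
  proof (rule fps_ext)
    fix n
    show "fps_nth (fps_deriv tt - fps_const 2 * (fps_X * fps_deriv tt) - fps_const 3 * (fps_X ^ 2 * fps_deriv tt)) n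
        = fps_nth (tt + fps_const 3 * (fps_X * tt)) n"
    proof (cases n)
      case 0 then show ?thesis by (simp add: tt_def)
    next
      case (Suc m)
      show ?thesis
      proof (cases m)
        case 0 then show ?thesis using Suc T2 by (simp add: tt_def fps_X_power_mult_nth numeral_2_eq_2)
      next
        case (Suc k)
        have "(real k + 2) * T (Suc (Suc k)) = (2 * real k + 3) * T (Suc k) + 3 * (real k + 1) * T k" by (rule T_rec)
        have r: "(real (Suc k) + 2) * T (Suc (Suc (Suc k))) = (2 * real (Suc k) + 3) * T (Suc (Suc k)) + 3 * (real (Suc k) + 1) * T (Suc k)"
          by (rule T_rec)
        have "fps_nth (fps_deriv tt - fps_const 2 * (fps_X * fps_deriv tt) - fps_const 3 * (fps_X ^ 2 * fps_deriv tt)) n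
           = (real k + 3) * T (Suc (Suc (Suc k))) - 2 * ((real k + 2) * T (Suc (Suc k))) - 3 * ((real k + 1) * T (Suc k))"
          using \<open>n = Suc m\<close> Suc by (simp only: fps_sub_nth fps_mult_left_const_nth fps_X_mult_nth fps_X_power_mult_nth dn) (simp add: add.commute)
        also have "\<dots> = T (Suc (Suc k)) + 3 * T (Suc k)" using r by (simp add: algebra_simps)
        also have "\<dots> = fps_nth (tt + fps_const 3 * (fps_X * tt)) n"
          using \<open>n = Suc m\<close> Suc by (simp add: tt_def)
        finally show ?thesis .
      qed
    qed
  qed
qed

lemma tt_sq: "tt ^ 2 * Dl = 1"
proof -
  have dD: "fps_deriv Dl = - 2 - 6 * fps_X"
    by (simp add: Dl_def numeral_fps_const fps_deriv_power)
  have "fps_deriv (tt ^ 2 * Dl) = 2 * tt * (fps_deriv tt * Dl) + tt ^ 2 * fps_deriv Dl"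
    by (simp add: fps_deriv_power algebra_simps numeral_fps_const power2_eq_square)
  also have "\<dots> = 0" unfolding tt_deriv dD by (simp add: algebra_simps power2_eq_square)
  finally have "fps_deriv (tt ^ 2 * Dl) = 0" .
  then have "tt ^ 2 * Dl = fps_const (fps_nth (tt ^ 2 * Dl) 0)" using fps_deriv_eq_0_iff by blast
  also have "fps_nth (tt ^ 2 * Dl) 0 = 1" by (simp add: tt_def Dl_def power2_eq_square numeral_fps_const)
  finally show ?thesis by simp
qed


lemma q1:
  fixes e Fo u Fe x :: "real fps"
  assumes "e = x*Fo" "Fo = 1 + u*Fo" "u = x*(Fe - 1)" "Fe = 1 + e*Fe"
  shows "(1+x)*e^2 - (1+x)*e + x = 0"
  using assms by algebra

lemma q2:
  fixes e t x :: "real fps"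
  assumes "t^2 * (1 - 2*x - 3*x^2) = 1" "(1+x)*e^2 - (1+x)*e + x = 0"
  shows "(1+x) * (2*e - (1 - (1-3*x)*t)) * (2*e + (1 - (1-3*x)*t) - 2) = 0"
  using assms by algebra

lemma q3:
  fixes e t x Fe :: "real fps"
  assumes "t^2 * (1 - 2*x - 3*x^2) = 1" "2*e = 1 - (1-3*x)*t" "Fe = 1 + e*Fe"
  shows "(2*x*Fe - (1+x)*(1 - (1-3*x)*t)) * (2 - 2*e) = 0"
  using assms by algebra

lemma q4:
  fixes e t x Fe d Fd R :: "real fps"
  assumes "t^2 * (1 - 2*x - 3*x^2) = 1" "2*d = (1+x)*(1 - (1-3*x)*t)" "Fd = 1 + d*Fd" "R = x*Fd"
  shows "(2*x*R - (1 - x - (1+x)*(1-3*x)*t)) * (2 - 2*d) = 0"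
  using assms by algebra

lemma lin: fixes FL L F A :: "real fps" assumes "FL = L*F + A*FL" "F = 1 + A*F" shows "FL = L*F^2"
  using assms by algebra

lemma q5a: fixes eL FLo oL Fo FLe Fe x :: "real fps"
  assumes "eL = x*(FLo + 1)" "FLo = oL*Fo^2" "oL = x*FLe" "FLe = eL*Fe^2"
  shows "eL*(1 - x^2*Fe^2*Fo^2) = x"
  using assms by algebra

lemma q5b: fixes x t :: "real fps"
  assumes "t^2 * (1 - 2*x - 3*x^2) = 1"
  shows "(x + x*(1-x)*t) * (16*x^4 - x^2*((1+x)*(1-(1-3*x)*t))^2*(1-(1-3*x)*t)^2) = 32*x^5"
  using assms by algebra

lemma q5c: fixes x t eL Fe Fo e:: "real fps"
  assumes "eL*(1 - x^2*Fe^2*Fo^2) = x" "2*x*Fe = b" "2*x*Fo = w"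
   "v * (16*x^4 - x^2*b^2*w^2) = 32*x^5"
  shows "16*x^4*((2*eL - v)*(1 - x^2*Fe^2*Fo^2)) = 0"
proof -
  have h: "v * (16*x^4 - x^2*(2*x*Fe)^2*(2*x*Fo)^2) = 32*x^5" using assms(2-4) by simp
  show ?thesis using h assms(1) by algebra
qed

lemma q6a: fixes RL FLd dL Fd FLe Fe eL x :: "real fps"
  assumes "RL = x*(FLd + 1)" "FLd = dL*Fd^2" "dL = x*(FLe + 1)" "FLe = eL*Fe^2"
  shows "32*x^6*RL = 32*x^7 + 8*x^4*(2*x^2*Fd)^2 + x^2*(2*x^2*Fd)^2*(2*x*Fe)^2*(2*eL)"
  using assms by algebra

lemma q6b: fixes x t :: "real fps"
  assumes "t^2 * (1 - 2*x - 3*x^2) = 1"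
  shows "32*x^7 + 8*x^4*(1 - x - (1+x)*(1-3*x)*t)^2
     + x^2*(1 - x - (1+x)*(1-3*x)*t)^2*((1+x)*(1-(1-3*x)*t))^2*(x + x*(1-x)*t)
     = -16*x^4*((-1 + 3*x + x^2 - 3*x^3) + (1 - 4*x + 6*x^3 + x^4)*t)"
  using assms by algebra


lemma gf0: "fps_nth (gf P) 0 = 0" by (simp add: gf_def trs_0)

lemma nz0: "fps_nth (f::real fps) 0 \<noteq> 0 \<Longrightarrow> f \<noteq> 0" by auto

lemma main_fps:
  shows "2 * fps_X * gf rt = 1 - fps_X - (1 + fps_X) * (1 - 3*fps_X) * tt"
    and "2 * fps_X^2 * gl rt = - ((-1 + 3*fps_X + fps_X^2 - 3*fps_X^3) + (1 - 4*fps_X + 6*fps_X^3 + fps_X^4) * tt)"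
proof -
  let ?X = "fps_X :: real fps"
  define e where "e = gf (good True)"
  define Fe where "Fe = ff (good True)"
  define u where "u = gf (good False)"
  define Fo where "Fo = ff (good False)"
  define d where "d = gf d1"
  define Fd where "Fd = ff d1"
  define R where "R = gf rt"
  define eL where "eL = gl (good True)"
  define FLe where "FLe = fl (good True)"
  define oL where "oL = gl (good False)"
  define FLo where "FLo = fl (good False)"
  define dL where "dL = gl d1"
  define FLd where "FLd = fl d1"
  define RL where "RL = gl rt"
  define w where "w = 1 - (1 - 3*?X)*tt"
  have tsq: "tt^2 * (1 - 2*?X - 3*?X^2) = 1" using tt_sq by (simp add: Dl_def)
  have E1: "e = ?X * Fo" unfolding e_def Fo_def by (subst good_True) (rule gf_allc)
  have E2: "Fo = 1 + u * Fo" unfolding Fo_def u_def by (rule ff_eq)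
  have E3: "u = ?X * (Fe - 1)" unfolding u_def Fe_def by (rule gf_gF)
  have E4: "Fe = 1 + e * Fe" unfolding Fe_def e_def by (rule ff_eq)
  have E5: "d = ?X * Fe" unfolding d_def Fe_def d1_def by (rule gf_allc)
  have E6: "Fd = 1 + d * Fd" unfolding Fd_def d_def by (rule ff_eq)
  have E7: "R = ?X * Fd" unfolding R_def Fd_def rt_def by (rule gf_allc)
  have L1: "eL = ?X * (FLo + 1)" unfolding eL_def FLo_def by (subst good_True) (rule gl_allc)
  have L2: "FLo = oL * Fo + u * FLo" unfolding FLo_def oL_def Fo_def u_def by (rule fl_eq)
  have L3: "oL = ?X * FLe" unfolding oL_def FLe_def by (rule gl_gF)
  have L4: "FLe = eL * Fe + e * FLe" unfolding FLe_def eL_def Fe_def e_def by (rule fl_eq)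
  have L5: "dL = ?X * (FLe + 1)" unfolding dL_def FLe_def d1_def by (rule gl_allc)
  have L6: "FLd = dL * Fd + d * FLd" unfolding FLd_def dL_def Fd_def d_def by (rule fl_eq)
  have L7: "RL = ?X * (FLd + 1)" unfolding RL_def FLd_def rt_def by (rule gl_allc)
  have e0: "fps_nth e 0 = 0" unfolding e_def by (rule gf0)
  have d0: "fps_nth d 0 = 0" unfolding d_def by (rule gf0)
  have w0: "fps_nth w 0 = 0" by (simp add: w_def tt_def numeral_fps_const)
  have "(1+?X) * (2*e - w) * (2*e + w - 2) = 0"
    unfolding w_def by (rule q2[OF tsq q1[OF E1 E2 E3 E4]])
  moreover have "(1+?X) \<noteq> 0" by (rule nz0) simp
  moreover have "2*e + w - 2 \<noteq> 0" by (rule nz0) (simp add: e0 w0 numeral_fps_const)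
  ultimately have S1: "2*e = w" by simp
  have "(2*?X*Fe - (1+?X)*w) * (2 - 2*e) = 0"
    unfolding w_def by (rule q3[OF tsq _ E4]) (simp add: S1[unfolded w_def])
  moreover have "2 - 2*e \<noteq> 0" by (rule nz0) (simp add: e0 numeral_fps_const)
  ultimately have S2: "2*?X*Fe = (1+?X)*w" by simp
  have S2': "2*d = (1+?X)*w" using S2 E5 by (simp add: mult.assoc)
  have "(2*?X*R - (1 - ?X - (1+?X)*(1-3*?X)*tt)) * (2 - 2*d) = 0"
    by (rule q4[OF tsq _ E6 E7]) (simp add: S2'[unfolded w_def])
  moreover have "2 - 2*d \<noteq> 0" by (rule nz0) (simp add: d0 numeral_fps_const)
  ultimately have S3: "2*?X*R = 1 - ?X - (1+?X)*(1-3*?X)*tt" by simp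
  then show "2 * fps_X * gf rt = 1 - fps_X - (1 + fps_X) * (1 - 3*fps_X) * tt" by (simp add: R_def)
  have FLo': "FLo = oL*Fo^2" by (rule lin[OF L2 E2])
  have FLe': "FLe = eL*Fe^2" by (rule lin[OF L4 E4])
  have FLd': "FLd = dL*Fd^2" by (rule lin[OF L6 E6])
  have A: "eL*(1 - ?X^2*Fe^2*Fo^2) = ?X" by (rule q5a[OF L1 FLo' L3 FLe'])
  have Fo2: "2*?X*Fo = w" using S1 E1 by (simp add: mult.assoc)
  have "16*?X^4*((2*eL - (?X + ?X*(1-?X)*tt))*(1 - ?X^2*Fe^2*Fo^2)) = 0"
    by (rule q5c[OF A S2 Fo2]) (use q5b[OF tsq] in \<open>simp add: w_def\<close>)
  moreover have "(16::real fps)*?X^4 \<noteq> 0" by (simp add: numeral_fps_const)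
  moreover have "1 - ?X^2*Fe^2*Fo^2 \<noteq> 0" by (rule nz0) (simp add: power2_eq_square)
  ultimately have S5: "2*eL = ?X + ?X*(1-?X)*tt" by simp
  have "32*?X^6*RL = 32*?X^7 + 8*?X^4*(2*?X^2*Fd)^2 + ?X^2*(2*?X^2*Fd)^2*(2*?X*Fe)^2*(2*eL)"
    by (rule q6a[OF L7 FLd' L5 FLe'])
  also have "2*?X^2*Fd = 1 - ?X - (1+?X)*(1-3*?X)*tt" using S3 E7 by (simp add: power2_eq_square mult.assoc)
  also have "2*?X*Fe = (1+?X)*(1-(1-3*?X)*tt)" using S2 by (simp add: w_def)
  also note S5
  also note q6b[OF tsq]
  finally have "32*?X^6*RL = -16*?X^4*((-1 + 3*?X + ?X^2 - 3*?X^3) + (1 - 4*?X + 6*?X^3 + ?X^4)*tt)" .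
  then have "(16*?X^4) * (2*?X^2*RL + ((-1 + 3*?X + ?X^2 - 3*?X^3) + (1 - 4*?X + 6*?X^3 + ?X^4)*tt)) = 0"
    by (simp add: algebra_simps)
  moreover have "(16::real fps)*?X^4 \<noteq> 0" by (simp add: numeral_fps_const)
  ultimately have "2*?X^2*RL + ((-1 + 3*?X + ?X^2 - 3*?X^3) + (1 - 4*?X + 6*?X^3 + ?X^4)*tt) = 0"
    by simp
  then show "2 * fps_X^2 * gl rt = - ((-1 + 3*fps_X + fps_X^2 - 3*fps_X^3) + (1 - 4*fps_X + 6*fps_X^3 + fps_X^4) * tt)"
    unfolding RL_def[symmetric] eq_neg_iff_add_eq_0 .
qed


lemma T_pos: "T n > 0"
proof (induction n rule: T.induct)
  case (3 n)
  have h1: "0 < (2 * real n + 3) * T (Suc n)" using 3 by simp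
  have h2: "0 < 3 * (real n + 1) * T n" using 3 by simp
  have "0 < (2 * real n + 3) * T (Suc n) + 3 * (real n + 1) * T n"
    by (rule add_pos_pos[OF h1 h2])
  then show ?case by (simp add: T.simps(3))
qed simp_all

definition rho :: "nat \<Rightarrow> real" where "rho n = T (Suc n) / T n"

lemma rho_pos: "rho n > 0" using T_pos by (simp add: rho_def)

lemma rho_rec: "rho (Suc n) = ((2 * real n + 3) + 3 * (real n + 1) / rho n) / (real n + 2)"
proof -
  have p: "T n > 0" "T (Suc n) > 0" by (rule T_pos)+
  show ?thesis using p unfolding rho_def T.simps(3) by (simp add: field_simps)
qed

lemma step:
  fixes r x :: real
  assumes "2 \<le> r" "r \<le> 4" "x * \<bar>r - 3\<bar> \<le> 12" "x \<ge> 2"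
  defines "r' \<equiv> ((2 * x + 3) + 3 * (x + 1) / r) / (x + 2)"
  shows "2 \<le> r' \<and> r' \<le> 4 \<and> (x + 1) * \<bar>r' - 3\<bar> \<le> 12"
proof -
  have x2: "x + 2 > 0" using assms by simp
  have q1: "3 * (x + 1) / r \<le> 3 * (x + 1) / 2" using assms by (intro divide_left_mono) auto
  have q2: "3 * (x + 1) / r \<ge> 3 * (x + 1) / 4" using assms by (intro divide_left_mono) auto
  have q1': "3 * (x + 1) / r \<le> (3/2) * x + 3/2"
  proof -
    have "3 * (x + 1) / 2 = (3/2) * x + 3/2" by simp
    then show ?thesis using q1 by linarith
  qed
  have q2': "3 * (x + 1) / r \<ge> (3/4) * x + 3/4"
  proof -
    have "3 * (x + 1) / 4 = (3/4) * x + 3/4" by simp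
    then show ?thesis using q2 by linarith
  qed
  have "(2 * x + 3) + 3 * (x + 1) / r \<le> 4 * (x + 2)" using q1' assms(4) by argo
  then have a: "r' \<le> 4" unfolding r'_def using pos_divide_le_eq[OF x2] by blast
  have "2 * (x + 2) \<le> (2 * x + 3) + 3 * (x + 1) / r" using q2' assms(4) by argo
  then have b: "2 \<le> r'" unfolding r'_def using pos_le_divide_eq[OF x2] by blast
  have r0: "r \<noteq> 0" "x + 2 \<noteq> 0" using assms(1) x2 by auto
  have m1: "r' * (x + 2) = (2 * x + 3) + 3 * (x + 1) / r" unfolding r'_def using r0 by simp
  have m2: "((2 * x + 3) + 3 * (x + 1) / r) * r = (2*x+3)*r + 3*(x+1)"
  proof -
    have "3 * (x + 1) / r * r = 3 * (x + 1)" using r0 by simp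
    then show ?thesis by (simp only: distrib_right)
  qed
  have m: "r' * (r * (x + 2)) = (2*x+3)*r + 3*(x+1)"
    using m1 m2 by (metis mult.assoc mult.commute)
  have dm: "(r' - 3) * (r * (x + 2)) = (x+1)*(3-r) - 2*r" using m by (simp add: algebra_simps)
  define E where "E = \<bar>r - 3\<bar>"
  have rx: "r * (x + 2) > 0" using assms(1) x2 by simp
  have P: "\<bar>r' - 3\<bar> * (r * (x + 2)) \<le> (x + 1) * E + 2 * r"
  proof -
    have "\<bar>r' - 3\<bar> * (r * (x + 2)) = \<bar>(r' - 3) * (r * (x + 2))\<bar>" using rx by (metis abs_mult abs_of_pos)
    also have "\<dots> = \<bar>(x+1)*(3-r) - 2*r\<bar>" by (simp add: dm)
    also have "\<dots> \<le> \<bar>(x+1)*(3-r)\<bar> + \<bar>2*r\<bar>" by (rule abs_triangle_ineq4)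
    also have "\<dots> = (x + 1) * E + 2 * r" using assms(1,4) by (simp add: E_def abs_mult abs_minus_commute)
    finally show ?thesis .
  qed
  have G: "(x + 1) * ((x + 1) * E + 2 * r) \<le> 12 * (r * (x + 2))"
  proof -
    have xE: "x * E \<le> 12" using assms(3) by (simp add: E_def)
    have "x * ((x + 1) * ((x + 1) * E + 2 * r)) = (x+1)^2 * (x * E) + 2 * r * x * (x + 1)"
      by (simp add: algebra_simps power2_eq_square)
    also have "\<dots> \<le> 12 * (x+1)^2 + 2 * r * x * (x + 1)"
    proof -
      have "(x+1)^2 * (x * E) \<le> (x+1)^2 * 12" using xE by (intro mult_left_mono) auto
      then show ?thesis by (simp add: mult.commute)
    qed
    also have "\<dots> \<le> x * (12 * (r * (x + 2)))"
    proof -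
      have "2 * (x * (10 * x + 22)) \<le> r * (x * (10 * x + 22))"
        using assms(1,4) by (intro mult_right_mono) auto
      moreover have "12 * (x+1)^2 \<le> 2 * (x * (10 * x + 22))"
      proof -
        have hx: "2 * x \<le> x * x" using assms(4) by (intro mult_right_mono) auto
        have e1: "12 * (x+1)^2 = 12 * (x * x) + 24 * x + 12" by (simp add: power2_eq_square algebra_simps)
        have e2: "2 * (x * (10 * x + 22)) = 20 * (x * x) + 44 * x" by (simp add: algebra_simps)
        show ?thesis unfolding e1 e2 using hx assms(4) by linarith
      qed
      moreover have "x * (12 * (r * (x + 2))) = r * (x * (10 * x + 22)) + 2 * r * x * (x + 1)"
        by (simp add: algebra_simps)
      ultimately show ?thesis by linarith
    qed
    finally have "x * ((x + 1) * ((x + 1) * E + 2 * r)) \<le> x * (12 * (r * (x + 2)))" .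
    then show ?thesis using assms(4) by (simp add: mult_le_cancel_left_pos)
  qed
  have "((x + 1) * \<bar>r' - 3\<bar>) * (r * (x + 2)) \<le> 12 * (r * (x + 2))"
  proof -
    have "((x + 1) * \<bar>r' - 3\<bar>) * (r * (x + 2)) = (x + 1) * (\<bar>r' - 3\<bar> * (r * (x + 2)))" by simp
    also have "\<dots> \<le> (x + 1) * ((x + 1) * E + 2 * r)" using P assms(4) by (simp add: mult_left_mono)
    also have "\<dots> \<le> 12 * (r * (x + 2))" by (rule G)
    finally show ?thesis .
  qed
  then have c: "(x + 1) * \<bar>r' - 3\<bar> \<le> 12" using rx by (simp add: mult_le_cancel_right_pos)
  show ?thesis using a b c by simp
qed

lemma rho_bounds: "n \<ge> 2 \<Longrightarrow> 2 \<le> rho n \<and> rho n \<le> 4 \<and> real n * \<bar>rho n - 3\<bar> \<le> 12"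
proof (induction n rule: nat_induct_at_least)
  case base
  have "T 3 = 7" by (simp add: numeral_3_eq_3 numeral_2_eq_2 T.simps(3))
  moreover have "T 2 = 3" by (simp add: numeral_2_eq_2 T.simps(3))
  ultimately show ?case by (simp add: rho_def)
next
  case (Suc n)
  then show ?case using step[of "rho n" "real n"] by (simp add: rho_rec add.commute)
qed

lemma rho_bd: "n \<ge> 2 \<Longrightarrow> \<bar>rho n - 3\<bar> \<le> 12 / real n"
  using rho_bounds[of n] by (simp add: le_divide_eq mult.commute)

lemma rho_lim: "rho \<longlonglongrightarrow> 3"
proof (rule tendsto_sandwich[of "\<lambda>n. 3 - 12 / real n" _ _ "\<lambda>n. 3 + 12 / real n"])
  show "\<forall>\<^sub>F n in sequentially. 3 - 12 / real n \<le> rho n"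
    using eventually_ge_at_top[of 2] by eventually_elim (use rho_bd in force)
  show "\<forall>\<^sub>F n in sequentially. rho n \<le> 3 + 12 / real n"
    using eventually_ge_at_top[of 2] by eventually_elim (use rho_bd in force)
  have "(\<lambda>n. 12 / real n) \<longlonglongrightarrow> 0" by (rule lim_const_over_n)
  then show "(\<lambda>n. 3 - 12 / real n) \<longlonglongrightarrow> 3" "(\<lambda>n. 3 + 12 / real n) \<longlonglongrightarrow> 3"
    using tendsto_diff[OF tendsto_const] tendsto_add[OF tendsto_const] by fastforce+
qed


lemma nthnum: "fps_nth (numeral k * (f::real fps)) n = numeral k * fps_nth f n"
  by (simp add: numeral_fps_const)

lemma C1: "2 * real (card (trs rt (Suc n))) = - T (n+2) + 2 * T (n+1) + 3 * T n"
proof -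
  have ex: "1 - fps_X - (1 + fps_X) * (1 - 3*fps_X) * tt
      = 1 - fps_X - tt + 2*(fps_X*tt) + 3*(fps_X^2*tt)" by algebra
  have lhs: "2 * fps_X * gf rt = fps_X * (2 * gf rt)" by (simp add: mult_ac)
  have "fps_nth (fps_X * (2 * gf rt)) (n+2) = fps_nth (1 - fps_X - tt + 2*(fps_X*tt) + 3*(fps_X^2*tt)) (n+2)"
    using main_fps(1) unfolding lhs ex by simp
  then show ?thesis
    by (simp only: fps_X_mult_nth nthnum fps_add_nth fps_sub_nth fps_X_power_mult_nth)
       (simp add: tt_def gf_def)
qed

lemma C2: "2 * (\<Sum>t\<in>trs rt (Suc (Suc n)). real (leaves t)) = - (T (n+4) - 4 * T (n+3) + 6 * T (n+1) + T n)"
proof -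
  have ex: "- ((-1 + 3*fps_X + fps_X^2 - 3*fps_X^3) + (1 - 4*fps_X + 6*fps_X^3 + fps_X^4) * tt)
      = 1 - 3*fps_X - fps_X^2 + 3*fps_X^3 - tt + 4*(fps_X*tt) - 6*(fps_X^3*tt) - fps_X^4*tt" by algebra
  have lhs: "2 * fps_X^2 * gl rt = fps_X^2 * (2 * gl rt)" by (simp add: mult_ac)
  have "fps_nth (fps_X^2 * (2 * gl rt)) (n+4) = fps_nth (1 - 3*fps_X - fps_X^2 + 3*fps_X^3 - tt + 4*(fps_X*tt) - 6*(fps_X^3*tt) - fps_X^4*tt) (n+4)"
    using main_fps(2) unfolding lhs ex by simp
  then show ?thesis
    by (simp only: fps_X_mult_nth nthnum fps_add_nth fps_sub_nth fps_X_power_mult_nth)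
       (simp add: tt_def gl_def numeral_eq_Suc)
qed

lemma avg_eq: "avg_leaves n = (\<Sum>t\<in>trs rt n. real (leaves t)) / real (card (trs rt n))"
  unfolding avg_leaves_def retakh_trees_def trs_def by (simp add: retakh_rt)

definition g :: "nat \<Rightarrow> real" where
  "g m = 9/4 * (4 * rho (Suc (Suc m)) - rho (Suc (Suc (Suc m))) * rho (Suc (Suc m))
          - 6 / rho (Suc m) - 1 / (rho (Suc m) * rho m)) / (rho (Suc (Suc m)) - 1)"

lemma key: "avg_leaves (Suc (Suc m)) / (4/9 * real (Suc (Suc m))) = g m"
proof -
  define S where "S = (\<Sum>t\<in>trs rt (Suc (Suc m)). real (leaves t))"
  define C where "C = real (card (trs rt (Suc (Suc m))))"
  define a where "a = T (Suc (Suc m))"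
  define r0 where "r0 = rho m"
  define r1 where "r1 = rho (Suc m)"
  define r2 where "r2 = rho (Suc (Suc m))"
  define r3 where "r3 = rho (Suc (Suc (Suc m)))"
  define k where "k = real m + 2"
  have k0: "k > 0" by (simp add: k_def)
  have a0: "a > 0" unfolding a_def by (rule T_pos)
  have rp: "r0 > 0" "r1 > 0" "r2 > 0" "r3 > 0" unfolding r0_def r1_def r2_def r3_def by (rule rho_pos)+
  have t3: "T (Suc (Suc (Suc m))) = r2 * a" unfolding r2_def a_def rho_def using T_pos[of "Suc (Suc m)"] by simp
  have t4': "T (Suc (Suc (Suc (Suc m)))) = r3 * T (Suc (Suc (Suc m)))" unfolding r3_def rho_def
    using T_pos[of "Suc (Suc (Suc m))"] by simp
  have t4: "T (Suc (Suc (Suc (Suc m)))) = r3 * r2 * a" unfolding t4' t3 by (simp add: mult.assoc)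
  have t1: "T (Suc m) = a / r1" unfolding r1_def a_def rho_def using T_pos[of "Suc m"] T_pos[of "Suc (Suc m)"] by simp
  have t0: "T m = a / (r1 * r0)" unfolding r1_def r0_def a_def rho_def using T_pos[of "Suc m"] T_pos[of "Suc (Suc m)"] T_pos[of m] by simp
  have hS: "2 * S = - (T (Suc (Suc (Suc (Suc m)))) - 4 * T (Suc (Suc (Suc m))) + 6 * T (Suc m) + T m)"
    unfolding S_def using C2[of m] by (simp add: numeral_eq_Suc)
  have hC: "2 * C = - T (Suc (Suc (Suc m))) + 2 * T (Suc (Suc m)) + 3 * T (Suc m)"
    unfolding C_def using C1[of "Suc m"] by (simp add: numeral_eq_Suc)
  have rec: "(real (Suc m) + 2) * T (Suc (Suc (Suc m))) = (2 * real (Suc m) + 3) * T (Suc (Suc m)) + 3 * (real (Suc m) + 1) * T (Suc m)"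
    by (rule T_rec)
  have hD: "2 * k * C = T (Suc (Suc (Suc m))) - T (Suc (Suc m))"
  proof -
    have "2 * k * C = k * (2 * C)" by simp
    also have "\<dots> = k * (- T (Suc (Suc (Suc m))) + 2 * T (Suc (Suc m))) + (real m + 2) * (3 * T (Suc m))"
      unfolding hC k_def by (simp add: algebra_simps)
    also have "\<dots> = T (Suc (Suc (Suc m))) - T (Suc (Suc m))"
      using rec unfolding k_def by (simp add: algebra_simps)
    finally show ?thesis .
  qed
  define n' where "n' = 4 * r2 - r3 * r2 - 6 / r1 - 1 / (r1 * r0)"
  have SS: "S = a * n' / 2"
  proof -
    have "2 * S = a * n'" unfolding hS t0 t1 t3 t4 n'_def using rp a0 by (simp add: field_simps)
    then show ?thesis by simp
  qed
  have CC: "C = a * (r2 - 1) / (2 * k)"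
  proof -
    have "2 * k * C = a * (r2 - 1)" unfolding hD t3 a_def[symmetric] by (simp add: algebra_simps)
    then show ?thesis using k0 by (simp add: field_simps)
  qed
  have "avg_leaves (Suc (Suc m)) / (4/9 * real (Suc (Suc m))) = (S / C) / (4/9 * k)"
    unfolding avg_eq S_def C_def k_def by simp
  also have "\<dots> = 9/4 * n' / (r2 - 1)"
  proof (cases "r2 = 1")
    case True then show ?thesis unfolding CC by simp
  next
    case False
    then have "r2 - 1 \<noteq> 0" by simp
    then show ?thesis unfolding SS CC using a0 k0 by (simp add: field_simps)
  qed
  also have "\<dots> = g m" unfolding g_def n'_def r0_def r1_def r2_def r3_def by simp
  finally show ?thesis .
qed

lemma g_lim: "g \<longlonglongrightarrow> 1"
proof -
  have l: "(\<lambda>m. rho (m + k)) \<longlonglongrightarrow> 3" for k by (rule LIMSEQ_ignore_initial_segment[OF rho_lim])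
  have l0: "(\<lambda>m. rho m) \<longlonglongrightarrow> 3" by (rule rho_lim)
  have l1: "(\<lambda>m. rho (Suc m)) \<longlonglongrightarrow> 3" using l[of 1] by simp
  have l2: "(\<lambda>m. rho (Suc (Suc m))) \<longlonglongrightarrow> 3" using l[of 2] by (simp add: numeral_eq_Suc)
  have l3: "(\<lambda>m. rho (Suc (Suc (Suc m)))) \<longlonglongrightarrow> 3" using l[of 3] by (simp add: numeral_eq_Suc)
  have "g \<longlonglongrightarrow> 9/4 * (4 * 3 - 3 * 3 - 6 / 3 - 1 / (3 * 3)) / (3 - 1)"
    unfolding g_def
    by (intro tendsto_intros l0 l1 l2 l3) auto
  then show ?thesis by simp
qed

theorem mainTheorem7:
  shows "avg_leaves \<sim>[at_top] (\<lambda>n. 4 / 9 * real n)"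
proof (rule asymp_equivI')
  have "(\<lambda>m. avg_leaves (m + 2) / (4 / 9 * real (m + 2))) \<longlonglongrightarrow> 1"
  proof -
    have "(\<lambda>m. avg_leaves (m + 2) / (4 / 9 * real (m + 2))) = g"
    proof
      fix m show "avg_leaves (m + 2) / (4 / 9 * real (m + 2)) = g m"
        using key[of m] by (simp add: numeral_eq_Suc)
    qed
    then show ?thesis using g_lim by simp
  qed
  then show "(\<lambda>n. avg_leaves n / (4 / 9 * real n)) \<longlonglongrightarrow> 1" by (rule LIMSEQ_offset)
qed


end
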